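(* Let $A,B$ be interior algebras. Then $\{\mathcal{O}(h): h\in\mathrm{hom}(A,B)\}=\mathrm{hom}(\mathcal{O}(A),\mathcal{O}(B))$ if and only if every interior algebra homomorphism $h\colon A^*\to B^*$ has an extension to a homomorphism $A\to B$.
   Context: An interior algebra $\langle B,g\rangle$ is a Boolean algebra with an operator $g$ satisfying $g(1)=1$, $g(xy)=g(x)g(y)$, $g(x)\le x$, $gg(x)=g(x)$; $a$ is open if $g(a)=a$. $\mathcal{O}(B)=B^\circ$ is the Heyting algebra of open elements with $a\Rightarrow b=g(-a+b)$, and $\mathcal{O}(h)$ is the restriction of a homomorphism $h$ to open elements. $\mathrm{hom}(\mathcal{O}(A),\mathcal{O}(B))$ is the set of Heyting algebra homomorphisms. $A^*$ is the subalgebra of $A$ generated by its open elements. *)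

theory Defs
  imports Main "HOL-Library.FuncSet"
begin

definition interior_alg :: "('a::boolean_algebra \<Rightarrow> 'a) \<Rightarrow> bool" where
  "interior_alg g \<longleftrightarrow> g top = top \<and> (\<forall>x y. g (inf x y) = inf (g x) (g y))
     \<and> (\<forall>x. g x \<le> x) \<and> (\<forall>x. g (g x) = g x)"

definition opens :: "('a::boolean_algebra \<Rightarrow> 'a) \<Rightarrow> 'a set" where
  "opens g = {a. g a = a}"

definition himp :: "('a::boolean_algebra \<Rightarrow> 'a) \<Rightarrow> 'a \<Rightarrow> 'a \<Rightarrow> 'a" where
  "himp g a b = g (sup (- a) b)"

definition int_hom :: "('a::boolean_algebra \<Rightarrow> 'a) \<Rightarrow> ('b::boolean_algebra \<Rightarrow> 'b) \<Rightarrow> ('a \<Rightarrow> 'b) \<Rightarrow> bool" where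
  "int_hom gA gB h \<longleftrightarrow> h bot = bot \<and> h top = top
     \<and> (\<forall>x y. h (sup x y) = sup (h x) (h y)) \<and> (\<forall>x y. h (inf x y) = inf (h x) (h y))
     \<and> (\<forall>x. h (- x) = - h x) \<and> (\<forall>x. h (gA x) = gB (h x))"

definition heyting_hom :: "('a::boolean_algebra \<Rightarrow> 'a) \<Rightarrow> ('b::boolean_algebra \<Rightarrow> 'b) \<Rightarrow> ('a \<Rightarrow> 'b) \<Rightarrow> bool" where
  "heyting_hom gA gB f \<longleftrightarrow> f \<in> opens gA \<rightarrow> opens gB \<and> f bot = bot \<and> f top = top
     \<and> (\<forall>a\<in>opens gA. \<forall>b\<in>opens gA. f (sup a b) = sup (f a) (f b)
          \<and> f (inf a b) = inf (f a) (f b) \<and> f (himp gA a b) = himp gB (f a) (f b))"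

definition bool_subalg :: "'a::boolean_algebra set \<Rightarrow> bool" where
  "bool_subalg S \<longleftrightarrow> bot \<in> S \<and> top \<in> S \<and> (\<forall>x\<in>S. \<forall>y\<in>S. sup x y \<in> S \<and> inf x y \<in> S)
     \<and> (\<forall>x\<in>S. - x \<in> S)"

definition star :: "('a::boolean_algebra \<Rightarrow> 'a) \<Rightarrow> 'a set" where
  "star g = \<Inter>{S. bool_subalg S \<and> opens g \<subseteq> S}"

definition int_hom_on :: "'a::boolean_algebra set \<Rightarrow> 'b::boolean_algebra set \<Rightarrow>
    ('a \<Rightarrow> 'a) \<Rightarrow> ('b \<Rightarrow> 'b) \<Rightarrow> ('a \<Rightarrow> 'b) \<Rightarrow> bool" where
  "int_hom_on S T gA gB h \<longleftrightarrow> h \<in> S \<rightarrow> T \<and> h bot = bot \<and> h top = top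
     \<and> (\<forall>x\<in>S. \<forall>y\<in>S. h (sup x y) = sup (h x) (h y) \<and> h (inf x y) = inf (h x) (h y))
     \<and> (\<forall>x\<in>S. h (- x) = - h x \<and> h (gA x) = gB (h x))"

end

theory Submission
  imports Defs
begin


fun dnf :: "('a::boolean_algebra \<times> 'a) list \<Rightarrow> 'a" where
  "dnf [] = bot"
| "dnf ((a,b)#xs) = sup (inf a (- b)) (dnf xs)"

fun lerep :: "'a::boolean_algebra \<Rightarrow> 'a \<Rightarrow> ('a \<times> 'a) list \<Rightarrow> bool" where
  "lerep a b [] = (a \<le> b)"
| "lerep a b ((c,d)#ys) = (lerep a (sup b c) ys \<and> lerep (inf a d) b ys)"

lemma ba1: "inf a (- b) \<le> (bot::'a::boolean_algebra) \<longleftrightarrow> a \<le> b"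
  by (simp add: shunt2)

lemma ba_shunt: "(p::'a::boolean_algebra) \<le> sup q Y \<longleftrightarrow> inf p (- q) \<le> Y"
  by (simp add: shunt2)

lemma ba2: "inf (inf a (- b)) (- inf c (- d)) =
   sup (inf a (- sup b c)) (inf (inf a d) (- b)) " for a b c d :: "'a::boolean_algebra"
proof -
  have "inf (inf a (- b)) (- inf c (- d)) = inf (inf a (- b)) (sup (- c) d)" by simp
  also have "\<dots> = sup (inf (inf a (- b)) (- c)) (inf (inf a (- b)) d)"
    by (rule inf_sup_distrib1)
  also have "inf (inf a (- b)) (- c) = inf a (- sup b c)" by (simp add: inf_assoc)
  also have "inf (inf a (- b)) d = inf (inf a d) (- b)" by (simp add: inf_aci)
  finally show ?thesis .
qed

lemma lerep_iff: "inf a (- b) \<le> dnf ys \<longleftrightarrow> lerep a b ys"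
proof (induction ys arbitrary: a b)
  case Nil
  then show ?case using ba1 by simp
next
  case (Cons y ys)
  obtain c d where y: "y = (c,d)" by fastforce
  have "inf a (- b) \<le> dnf (y#ys) \<longleftrightarrow> inf (inf a (- b)) (- inf c (- d)) \<le> dnf ys"
  proof -
    have "dnf (y#ys) = sup (inf c (- d)) (dnf ys)" by (simp add: y)
    then show ?thesis by (simp only: ba_shunt)
  qed
  also have "\<dots> \<longleftrightarrow> inf a (- sup b c) \<le> dnf ys \<and> inf (inf a d) (- b) \<le> dnf ys"
    by (simp only: ba2 le_sup_iff)
  finally show ?case using Cons.IH[of a "sup b c"] Cons.IH[of "inf a d" b] y by simp
qed



definition mapF :: "('a \<Rightarrow> 'b) \<Rightarrow> ('a \<times> 'a) list \<Rightarrow> ('b \<times> 'b) list" where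
  "mapF f = map (\<lambda>(c,d). (f c, f d))"

lemma mapF_simps[simp]: "mapF f [] = []" "mapF f ((a,b)#xs) = (f a, f b) # mapF f xs"
  "mapF f (xs @ ys) = mapF f xs @ mapF f ys"
  by (auto simp: mapF_def)

lemma lerep_map:
  assumes cl: "\<forall>x\<in>L. \<forall>y\<in>L. sup x y \<in> L \<and> inf x y \<in> L"
    and hom: "\<forall>x\<in>L. \<forall>y\<in>L. f (sup x y) = sup (f x) (f y) \<and> f (inf x y) = inf (f x) (f y)"
  shows "a\<in>L \<Longrightarrow> b\<in>L \<Longrightarrow> set ys \<subseteq> L\<times>L \<Longrightarrow> lerep a b ys \<Longrightarrow> lerep (f a) (f b) (mapF f ys)"
proof (induction ys arbitrary: a b)
  case Nil
  then have "a = inf a b" by (simp add: inf.absorb1)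
  then have "f a = inf (f a) (f b)" using hom Nil by metis
  then show ?case by (simp add: inf.absorb_iff1)
next
  case (Cons y ys)
  obtain c d where y: "y = (c,d)" by fastforce
  have cd: "c \<in> L" "d \<in> L" using Cons.prems y by auto
  have 1: "lerep (f a) (f (sup b c)) (mapF f ys)"
    using Cons.IH[of a "sup b c"] Cons.prems cl cd y by auto
  have 2: "lerep (f (inf a d)) (f b) (mapF f ys)"
    using Cons.IH[of "inf a d" b] Cons.prems cl cd y by auto
  show ?case using 1 2 hom cd Cons.prems y by auto
qed

lemma dnf_le: "dnf xs \<le> Y \<longleftrightarrow> (\<forall>(a,b)\<in>set xs. inf a (- b) \<le> Y)"
  by (induction xs) auto

lemma dnf_append[simp]: "dnf (xs @ ys) = sup (dnf xs) (dnf ys)"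
  by (induction xs) (auto simp: sup_assoc)

lemma wd_le:
  assumes cl: "\<forall>x\<in>L. \<forall>y\<in>L. sup x y \<in> L \<and> inf x y \<in> L"
    and hom: "\<forall>x\<in>L. \<forall>y\<in>L. f (sup x y) = sup (f x) (f y) \<and> f (inf x y) = inf (f x) (f y)"
    and xs: "set xs \<subseteq> L\<times>L" and ys: "set ys \<subseteq> L\<times>L" and le: "dnf xs \<le> dnf ys"
  shows "dnf (mapF f xs) \<le> dnf (mapF f ys)"
  unfolding dnf_le
proof safe
  fix a b assume "(a,b) \<in> set (mapF f xs)"
  then obtain a0 b0 where ab: "(a0,b0) \<in> set xs" "a = f a0" "b = f b0"
    by (auto simp: mapF_def)
  have "inf a0 (- b0) \<le> dnf ys" using le ab(1) unfolding dnf_le by auto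
  then have "lerep a0 b0 ys" by (simp add: lerep_iff)
  then have "lerep a b (mapF f ys)"
    using lerep_map[OF cl hom, of a0 b0 ys] ab xs ys by auto
  then show "inf a (- b) \<le> dnf (mapF f ys)" by (simp add: lerep_iff)
qed

definition dinf :: "('a::boolean_algebra \<times> 'a) list \<Rightarrow> ('a \<times> 'a) list \<Rightarrow> ('a \<times> 'a) list" where
  "dinf xs ys = concat (map (\<lambda>(a,b). map (\<lambda>(c,d). (inf a c, sup b d)) ys) xs)"

lemma ba3: "inf (inf a c) (- sup b d) = inf (inf a (- b)) (inf c (- d))" for a b c d :: "'a::boolean_algebra"
  by (simp add: inf_aci)

lemma dnf_dinf1: "dnf (map (\<lambda>(c,d). (inf a c, sup b d)) ys) = inf (inf a (- b)) (dnf ys)"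
proof (induction ys)
  case Nil
  then show ?case by simp
next
  case (Cons y ys)
  obtain c d where y: "y = (c,d)" by fastforce
  show ?case using Cons y by (simp only: list.map dnf.simps prod.case ba3 inf_sup_distrib1)
qed

lemma dnf_dinf: "dnf (dinf xs ys) = inf (dnf xs) (dnf ys)"
  by (induction xs) (auto simp: dinf_def dnf_dinf1 inf_sup_distrib2)

lemma dinf_set: "set xs \<subseteq> L\<times>L \<Longrightarrow> set ys \<subseteq> L\<times>L \<Longrightarrow> \<forall>x\<in>L. \<forall>y\<in>L. sup x y \<in> L \<and> inf x y \<in> L
   \<Longrightarrow> set (dinf xs ys) \<subseteq> L\<times>L"
  by (auto simp: dinf_def)

lemma mapF_dinf1: "set ys \<subseteq> L\<times>L \<Longrightarrow> a \<in> L \<Longrightarrow> b \<in> L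
   \<Longrightarrow> \<forall>x\<in>L. \<forall>y\<in>L. f (sup x y) = sup (f x) (f y) \<and> f (inf x y) = inf (f x) (f y)
   \<Longrightarrow> mapF f (map (\<lambda>(c,d). (inf a c, sup b d)) ys) = map (\<lambda>(c,d). (inf (f a) c, sup (f b) d)) (mapF f ys)"
  by (induction ys) auto

lemma mapF_concat: "mapF f (concat xss) = concat (map (mapF f) xss)"
  by (induction xss) auto

lemma mapF_dinf: "set xs \<subseteq> L\<times>L \<Longrightarrow> set ys \<subseteq> L\<times>L
   \<Longrightarrow> \<forall>x\<in>L. \<forall>y\<in>L. f (sup x y) = sup (f x) (f y) \<and> f (inf x y) = inf (f x) (f y)
   \<Longrightarrow> mapF f (dinf xs ys) = dinf (mapF f xs) (mapF f ys)"
proof (induction xs)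
  case Nil
  then show ?case by (simp add: dinf_def)
next
  case (Cons x xs)
  obtain a b where x: "x = (a,b)" by fastforce
  show ?case using Cons mapF_dinf1[of ys L a b f] x by (simp add: dinf_def mapF_concat)
qed

fun dcompl :: "('a::boolean_algebra \<times> 'a) list \<Rightarrow> ('a \<times> 'a) list" where
  "dcompl [] = [(top, bot)]"
| "dcompl ((a,b)#xs) = dinf [(top,a),(b,bot)] (dcompl xs)"

lemma dnf_dcompl: "dnf (dcompl xs) = - dnf xs"
  by (induction xs rule: dcompl.induct) (auto simp: dnf_dinf)

lemma dcompl_set: "set xs \<subseteq> L\<times>L \<Longrightarrow> \<forall>x\<in>L. \<forall>y\<in>L. sup x y \<in> L \<and> inf x y \<in> L
   \<Longrightarrow> top \<in> L \<Longrightarrow> bot \<in> L \<Longrightarrow> set (dcompl xs) \<subseteq> L\<times>L"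
proof (induction xs rule: dcompl.induct)
  case 1
  then show ?case by simp
next
  case (2 a b xs)
  then show ?case using dinf_set[of "[(top,a),(b,bot)]" L "dcompl xs"] by auto
qed

lemma mapF_dcompl: "set xs \<subseteq> L\<times>L
   \<Longrightarrow> \<forall>x\<in>L. \<forall>y\<in>L. sup x y \<in> L \<and> inf x y \<in> L
   \<Longrightarrow> top \<in> L \<Longrightarrow> bot \<in> L \<Longrightarrow> f top = top \<Longrightarrow> f bot = bot
   \<Longrightarrow> \<forall>x\<in>L. \<forall>y\<in>L. f (sup x y) = sup (f x) (f y) \<and> f (inf x y) = inf (f x) (f y)
   \<Longrightarrow> mapF f (dcompl xs) = dcompl (mapF f xs)"
proof (induction xs rule: dcompl.induct)
  case 1
  then show ?case by simp
next
  case (2 a b xs)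
  have "mapF f (dcompl ((a,b)#xs)) = dinf (mapF f [(top,a),(b,bot)]) (mapF f (dcompl xs))"
    using mapF_dinf[of "[(top,a),(b,bot)]" L "dcompl xs" f] dcompl_set[of xs L] 2 by auto
  then show ?case using 2 by simp
qed

fun hl :: "('a::boolean_algebra \<Rightarrow> 'a) \<Rightarrow> ('a \<times> 'a) list \<Rightarrow> 'a" where
  "hl g [] = top"
| "hl g ((a,b)#xs) = inf (himp g a b) (hl g xs)"

lemma g_dnf: "interior_alg g \<Longrightarrow> g (- dnf xs) = hl g xs"
  by (induction xs) (auto simp: interior_alg_def himp_def)

lemma ia_mono: "interior_alg g \<Longrightarrow> x \<le> y \<Longrightarrow> g x \<le> g y"
  unfolding interior_alg_def by (metis inf.absorb_iff2 inf.orderI)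

lemma opens_cl:
  assumes "interior_alg g"
  shows "\<forall>x\<in>opens g. \<forall>y\<in>opens g. sup x y \<in> opens g \<and> inf x y \<in> opens g"
    "top \<in> opens g" "bot \<in> opens g" "himp g a b \<in> opens g"
proof -
  have g: "g top = top" "\<And>x y. g (inf x y) = inf (g x) (g y)" "\<And>x. g x \<le> x" "\<And>x. g (g x) = g x"
    using assms unfolding interior_alg_def by auto
  show "\<forall>x\<in>opens g. \<forall>y\<in>opens g. sup x y \<in> opens g \<and> inf x y \<in> opens g"
  proof safe
    fix x y assume "x \<in> opens g" "y \<in> opens g"
    then have xy: "g x = x" "g y = y" by (auto simp: opens_def)
    have "g (sup x y) \<ge> sup x y" using ia_mono[OF assms] xy
      by (metis le_sup_iff sup_ge1 sup_ge2)
    then show "sup x y \<in> opens g" using g(3) by (simp add: opens_def antisym)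
    show "inf x y \<in> opens g" using g(2) xy by (simp add: opens_def)
  qed
  show "top \<in> opens g" using g by (simp add: opens_def)
  show "bot \<in> opens g" using g(3)[of bot] by (simp add: opens_def le_bot)
  show "himp g a b \<in> opens g" using g(4) by (simp add: opens_def himp_def)
qed

lemma hl_open: "interior_alg g \<Longrightarrow> hl g xs \<in> opens g"
  by (induction xs) (auto simp: opens_cl)

definition R :: "('a::boolean_algebra \<Rightarrow> 'a) \<Rightarrow> 'a set" where
  "R g = {dnf xs | xs. set xs \<subseteq> opens g \<times> opens g}"

lemma R_subalg:
  assumes "interior_alg g"
  shows "bool_subalg (R g)" "opens g \<subseteq> R g"
proof -
  note cl = opens_cl[OF assms]
  show "bool_subalg (R g)"
    unfolding bool_subalg_def
  proof (intro conjI ballI)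
    show "bot \<in> R g" unfolding R_def by (rule CollectI, rule exI[of _ "[]"]) simp
    show "top \<in> R g" unfolding R_def using cl
      by (intro CollectI exI[of _ "[(top,bot)]"]) simp
    fix x y assume "x \<in> R g" "y \<in> R g"
    then obtain xs ys where xs: "x = dnf xs" "set xs \<subseteq> opens g \<times> opens g"
      and ys: "y = dnf ys" "set ys \<subseteq> opens g \<times> opens g" unfolding R_def by auto
    show "sup x y \<in> R g" unfolding R_def using xs ys
      by (intro CollectI exI[of _ "xs @ ys"]) simp
    show "inf x y \<in> R g" unfolding R_def using xs ys dinf_set[OF xs(2) ys(2) cl(1)]
      by (intro CollectI exI[of _ "dinf xs ys"]) (simp add: dnf_dinf)
  next
    fix x assume "x \<in> R g"
    then obtain xs where xs: "x = dnf xs" "set xs \<subseteq> opens g \<times> opens g"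
      unfolding R_def by auto
    show "- x \<in> R g" unfolding R_def using xs dcompl_set[OF xs(2) cl(1-3)]
      by (intro CollectI exI[of _ "dcompl xs"]) (simp add: dnf_dcompl)
  qed
  show "opens g \<subseteq> R g"
  proof
    fix a assume "a \<in> opens g"
    then show "a \<in> R g" unfolding R_def using cl
      by (intro CollectI exI[of _ "[(a,bot)]"]) simp
  qed
qed

lemma dnf_in_subalg: "bool_subalg S \<Longrightarrow> opens g \<subseteq> S \<Longrightarrow> set xs \<subseteq> opens g \<times> opens g
   \<Longrightarrow> dnf xs \<in> S"
proof (induction xs)
  case Nil
  then show ?case by (simp add: bool_subalg_def)
next
  case (Cons x xs)
  obtain a b where x: "x = (a,b)" by fastforce
  have "a \<in> S" "b \<in> S" using Cons x by auto
  then show ?case using Cons x unfolding bool_subalg_def by auto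
qed

lemma star_eq: "interior_alg g \<Longrightarrow> star g = R g"
proof
  assume ia: "interior_alg g"
  show "star g \<subseteq> R g" unfolding star_def using R_subalg[OF ia] by (intro Inter_lower) simp
  show "R g \<subseteq> star g" unfolding star_def R_def using dnf_in_subalg by blast
qed



lemma star_subalg: "interior_alg g \<Longrightarrow> bool_subalg (star g) \<and> opens g \<subseteq> star g"
  using star_eq R_subalg by metis

lemma heyting_of:
  assumes iaA: "interior_alg gA" and iaB: "interior_alg gB"
    and S: "bool_subalg S" "opens gA \<subseteq> S"
    and h: "h bot = bot" "h top = top"
      "\<forall>x\<in>S. \<forall>y\<in>S. h (sup x y) = sup (h x) (h y) \<and> h (inf x y) = inf (h x) (h y)"
      "\<forall>x\<in>S. h (- x) = - h x \<and> h (gA x) = gB (h x)"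
  shows "heyting_hom gA gB (restrict h (opens gA))"
proof -
  note clA = opens_cl[OF iaA]
  have ho: "h a \<in> opens gB" if "a \<in> opens gA" for a
  proof -
    have "gA a = a" using that by (simp add: opens_def)
    moreover have "h (gA a) = gB (h a)" using h(4) S(2) that by blast
    ultimately have "gB (h a) = h a" by simp
    then show ?thesis by (simp add: opens_def)
  qed
  have hi: "h (himp gA a b) = himp gB (h a) (h b)" if "a \<in> opens gA" "b \<in> opens gA" for a b
  proof -
    have ab: "a \<in> S" "b \<in> S" using that S(2) by auto
    then have "- a \<in> S" "sup (- a) b \<in> S" using S(1) unfolding bool_subalg_def by auto
    then show ?thesis unfolding himp_def using h(3,4) ab by auto
  qed
  have hs: "h (sup a b) = sup (h a) (h b)" "h (inf a b) = inf (h a) (h b)"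
    if "a \<in> opens gA" "b \<in> opens gA" for a b
    using h(3) S(2) that by blast+
  show ?thesis unfolding heyting_hom_def
  proof (intro conjI ballI)
    show "restrict h (opens gA) \<in> opens gA \<rightarrow> opens gB" using ho by simp
    show "restrict h (opens gA) bot = bot" using clA(3) h(1) by simp
    show "restrict h (opens gA) top = top" using clA(2) h(2) by simp
    fix a b assume ab: "a \<in> opens gA" "b \<in> opens gA"
    have "sup a b \<in> opens gA" "inf a b \<in> opens gA" using clA(1) ab by blast+
    then show "restrict h (opens gA) (sup a b) = sup (restrict h (opens gA) a) (restrict h (opens gA) b)"
      "restrict h (opens gA) (inf a b) = inf (restrict h (opens gA) a) (restrict h (opens gA) b)"
      using ab hs by simp_all
    show "restrict h (opens gA) (himp gA a b) = himp gB (restrict h (opens gA) a) (restrict h (opens gA) b)"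
      using ab hi clA(4) by simp
  qed
qed

lemma extend_heyting:
  assumes iaA: "interior_alg gA" and iaB: "interior_alg gB" and hh: "heyting_hom gA gB f"
  shows "\<exists>H. int_hom_on (star gA) (star gB) gA gB H \<and> (\<forall>a\<in>opens gA. H a = f a)"
proof -
  note clA = opens_cl[OF iaA]
  note clB = opens_cl[OF iaB]
  let ?LA = "opens gA"
  have fo: "\<And>a. a \<in> ?LA \<Longrightarrow> f a \<in> opens gB" and fb: "f bot = bot" and ft: "f top = top"
    and fhom: "\<forall>x\<in>?LA. \<forall>y\<in>?LA. f (sup x y) = sup (f x) (f y) \<and> f (inf x y) = inf (f x) (f y)"
    and fhi: "\<And>a b. a \<in> ?LA \<Longrightarrow> b \<in> ?LA \<Longrightarrow> f (himp gA a b) = himp gB (f a) (f b)"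
    using hh unfolding heyting_hom_def by auto
  define rep where "rep x = (SOME xs. set xs \<subseteq> ?LA \<times> ?LA \<and> dnf xs = x)" for x
  define H where "H x = dnf (mapF f (rep x))" for x
  have key: "H (dnf xs) = dnf (mapF f xs)" if xs: "set xs \<subseteq> ?LA \<times> ?LA" for xs
  proof -
    have "\<exists>ys. set ys \<subseteq> ?LA \<times> ?LA \<and> dnf ys = dnf xs" using xs by blast
    then have ys: "set (rep (dnf xs)) \<subseteq> ?LA \<times> ?LA" "dnf (rep (dnf xs)) = dnf xs"
      unfolding rep_def by (metis (mono_tags, lifting) someI_ex)+
    show ?thesis unfolding H_def
      using wd_le[OF clA(1) fhom ys(1) xs] wd_le[OF clA(1) fhom xs ys(1)] ys(2)
      by (simp add: antisym)
  qed
  have mset: "set (mapF f xs) \<subseteq> opens gB \<times> opens gB" if "set xs \<subseteq> ?LA \<times> ?LA" for xs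
    using that fo by (auto simp: mapF_def)
  have Hopen: "H a = f a" if "a \<in> ?LA" for a
  proof -
    have "H (dnf [(a,bot)]) = dnf [(f a, f bot)]" using key[of "[(a,bot)]"] that clA by simp
    then show ?thesis using fb by simp
  qed
  have fhl: "f (hl gA xs) = hl gB (mapF f xs)" if "set xs \<subseteq> ?LA \<times> ?LA" for xs
    using that
  proof (induction xs)
    case Nil
    then show ?case using ft by simp
  next
    case (Cons x xs)
    obtain a b where x: "x = (a,b)" by fastforce
    have "himp gA a b \<in> ?LA" "hl gA xs \<in> ?LA" using clA hl_open[OF iaA] by auto
    then show ?case using Cons x fhom fhi by auto
  qed
  have Hcompl: "H (- dnf xs) = - dnf (mapF f xs)" if xs: "set xs \<subseteq> ?LA \<times> ?LA" for xs
  proof -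
    have "H (- dnf xs) = H (dnf (dcompl xs))" by (simp add: dnf_dcompl)
    also have "\<dots> = dnf (mapF f (dcompl xs))" using key dcompl_set[OF xs clA(1-3)] by blast
    also have "\<dots> = dnf (dcompl (mapF f xs))"
      using mapF_dcompl[OF xs clA(1-3) ft fb fhom] by simp
    finally show ?thesis by (simp add: dnf_dcompl)
  qed
  have sA: "star gA = R gA" and sB: "star gB = R gB" using star_eq iaA iaB by auto
  have "int_hom_on (star gA) (star gB) gA gB H"
    unfolding int_hom_on_def sA sB
  proof (intro conjI ballI)
    show "H \<in> R gA \<rightarrow> R gB"
    proof
      fix x assume "x \<in> R gA"
      then obtain xs where xs: "x = dnf xs" "set xs \<subseteq> ?LA \<times> ?LA" unfolding R_def by auto
      show "H x \<in> R gB" unfolding R_def using key[OF xs(2)] xs mset[OF xs(2)] by auto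
    qed
    show "H bot = bot" using key[of "[]"] by simp
    show "H top = top" using key[of "[(top,bot)]"] clA fb ft by simp
  next
    fix x y assume "x \<in> R gA" "y \<in> R gA"
    then obtain xs ys where xs: "x = dnf xs" "set xs \<subseteq> ?LA \<times> ?LA"
      and ys: "y = dnf ys" "set ys \<subseteq> ?LA \<times> ?LA" unfolding R_def by auto
    show "H (sup x y) = sup (H x) (H y)"
      using key[of "xs @ ys"] key xs ys by simp
    have "H (inf x y) = H (dnf (dinf xs ys))" using xs ys by (simp add: dnf_dinf)
    also have "\<dots> = dnf (dinf (mapF f xs) (mapF f ys))"
      using key dinf_set[OF xs(2) ys(2) clA(1)] mapF_dinf[OF xs(2) ys(2) fhom] by simp
    finally show "H (inf x y) = inf (H x) (H y)" using key xs ys by (simp add: dnf_dinf)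
  next
    fix x assume "x \<in> R gA"
    then obtain xs where xs: "x = dnf xs" "set xs \<subseteq> ?LA \<times> ?LA" unfolding R_def by auto
    show "H (- x) = - H x" using Hcompl key xs by simp
    define ys where "ys = dcompl xs"
    have ys: "set ys \<subseteq> ?LA \<times> ?LA" "x = - dnf ys"
      using dcompl_set[OF xs(2) clA(1-3)] xs by (auto simp: ys_def dnf_dcompl)
    have "H (gA x) = H (hl gA ys)" using g_dnf[OF iaA] ys by simp
    also have "\<dots> = hl gB (mapF f ys)" using Hopen hl_open[OF iaA] fhl ys by simp
    also have "\<dots> = gB (- dnf (mapF f ys))" using g_dnf[OF iaB] by simp
    also have "\<dots> = gB (H x)" using Hcompl ys by simp
    finally show "H (gA x) = gB (H x)" .
  qed
  then show ?thesis using Hopen by blast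
qed



theorem lemma5p10:
  fixes gA :: "'a::boolean_algebra \<Rightarrow> 'a" and gB :: "'b::boolean_algebra \<Rightarrow> 'b"
  assumes "interior_alg gA" and "interior_alg gB"
  shows "{restrict h (opens gA) | h. int_hom gA gB h}
           = {f \<in> extensional (opens gA). heyting_hom gA gB f}
         \<longleftrightarrow> (\<forall>h. int_hom_on (star gA) (star gB) gA gB h \<longrightarrow>
               (\<exists>h'. int_hom gA gB h' \<and> (\<forall>x\<in>star gA. h' x = h x)))"
proof
  note iaA = assms(1) and iaB = assms(2)
  have stA: "bool_subalg (star gA)" "opens gA \<subseteq> star gA" using star_subalg[OF iaA] by auto
  {
    assume EQ: "{restrict h (opens gA) | h. int_hom gA gB h}
           = {f \<in> extensional (opens gA). heyting_hom gA gB f}"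
    show "\<forall>h. int_hom_on (star gA) (star gB) gA gB h \<longrightarrow>
               (\<exists>h'. int_hom gA gB h' \<and> (\<forall>x\<in>star gA. h' x = h x))"
    proof (intro allI impI)
      fix h assume hh: "int_hom_on (star gA) (star gB) gA gB h"
      have "heyting_hom gA gB (restrict h (opens gA))"
      proof (rule heyting_of[OF iaA iaB stA])
        show "h bot = bot" "h top = top"
          "\<forall>x\<in>star gA. \<forall>y\<in>star gA. h (sup x y) = sup (h x) (h y) \<and> h (inf x y) = inf (h x) (h y)"
          "\<forall>x\<in>star gA. h (- x) = - h x \<and> h (gA x) = gB (h x)"
          using hh unfolding int_hom_on_def by blast+
      qed
      then have "restrict h (opens gA) \<in> {f \<in> extensional (opens gA). heyting_hom gA gB f}"
        by simp
      then have "restrict h (opens gA) \<in> {restrict h (opens gA) | h. int_hom gA gB h}"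
        by (simp only: EQ)
      then obtain h' where h': "int_hom gA gB h'" "restrict h' (opens gA) = restrict h (opens gA)"
        by (auto simp del: restrict_apply)
      have ag: "h' a = h a" if "a \<in> opens gA" for a
        using h'(2) that by (metis restrict_apply')
      let ?S = "{x \<in> star gA. h' x = h x}"
      have hA: "bot \<in> star gA" "top \<in> star gA" "\<forall>x\<in>star gA. \<forall>y\<in>star gA. sup x y \<in> star gA \<and> inf x y \<in> star gA"
        "\<forall>x\<in>star gA. - x \<in> star gA" using stA(1) unfolding bool_subalg_def by blast+
      have hB: "h bot = bot" "h top = top"
        "\<forall>x\<in>star gA. \<forall>y\<in>star gA. h (sup x y) = sup (h x) (h y) \<and> h (inf x y) = inf (h x) (h y)"
        "\<forall>x\<in>star gA. h (- x) = - h x"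
        using hh unfolding int_hom_on_def by blast+
      have hC: "h' bot = bot" "h' top = top" "\<And>x y. h' (sup x y) = sup (h' x) (h' y)"
        "\<And>x y. h' (inf x y) = inf (h' x) (h' y)" "\<And>x. h' (- x) = - h' x"
        using h'(1) unfolding int_hom_def by blast+
      have "bool_subalg ?S"
        unfolding bool_subalg_def using hA hB hC by simp
      moreover have "opens gA \<subseteq> ?S" using ag stA by auto
      ultimately have "star gA \<subseteq> ?S" unfolding star_def by (intro Inter_lower) simp
      then show "\<exists>h'. int_hom gA gB h' \<and> (\<forall>x\<in>star gA. h' x = h x)" using h'(1) by blast
    qed
  }
  {
    assume EXT: "\<forall>h. int_hom_on (star gA) (star gB) gA gB h \<longrightarrow>
               (\<exists>h'. int_hom gA gB h' \<and> (\<forall>x\<in>star gA. h' x = h x))"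
    show "{restrict h (opens gA) | h. int_hom gA gB h}
           = {f \<in> extensional (opens gA). heyting_hom gA gB f}"
    proof
      show "{restrict h (opens gA) | h. int_hom gA gB h}
           \<subseteq> {f \<in> extensional (opens gA). heyting_hom gA gB f}"
      proof safe
        fix h assume "int_hom gA gB h"
        show "heyting_hom gA gB (restrict h (opens gA))"
        proof (rule heyting_of[OF iaA iaB, of UNIV])
          show "bool_subalg (UNIV :: 'a set)" by (simp add: bool_subalg_def)
          show "h bot = bot" "h top = top"
            "\<forall>x\<in>UNIV. \<forall>y\<in>UNIV. h (sup x y) = sup (h x) (h y) \<and> h (inf x y) = inf (h x) (h y)"
            "\<forall>x\<in>UNIV. h (- x) = - h x \<and> h (gA x) = gB (h x)"
            using \<open>int_hom gA gB h\<close> unfolding int_hom_def by blast+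
        qed simp
      qed simp
      show "{f \<in> extensional (opens gA). heyting_hom gA gB f}
           \<subseteq> {restrict h (opens gA) | h. int_hom gA gB h}"
      proof safe
        fix f assume fe: "f \<in> extensional (opens gA)" and fh: "heyting_hom gA gB f"
        obtain H where H: "int_hom_on (star gA) (star gB) gA gB H" "\<forall>a\<in>opens gA. H a = f a"
          using extend_heyting[OF iaA iaB fh] by blast
        obtain h' where h': "int_hom gA gB h'" "\<forall>x\<in>star gA. h' x = H x"
          using EXT H(1) by blast
        have "restrict h' (opens gA) = f"
        proof
          fix x show "restrict h' (opens gA) x = f x"
          proof (cases "x \<in> opens gA")
            case True
            then show ?thesis using h'(2) H(2) stA(2) by auto
          next
            case False
            then show ?thesis using fe by (simp add: extensional_def)
          qed
        qed
        then show "\<exists>h. f = restrict h (opens gA) \<and> int_hom gA gB h" using h'(1) by blast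
      qed
    qed
  }
qed

end
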